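(* With notation: $\xi=e^{i\pi/5}$, $\tau=\frac{1+\sqrt5}{2}$, $L(n)=\{\sum_{j=0}^9 n_j\xi^j: n_j\in\mathbb{N}_0,\ \sum_j n_j\le n\}\cap\mathbb{R}$, $\mathbb{Z}[\tau]=\mathbb{Z}+\mathbb{Z}\tau$, $x\mapsto x'$ the automorphism $a+b\sqrt5\mapsto a-b\sqrt5$ of $\mathbb{Q}[\sqrt5]$, and $\Sigma(\Omega)=\{x\in\mathbb{Z}[\tau]:x'\in\Omega\}$: for every integer $n\ge3$, $L(n)$ is a proper subset of $\Sigma([-n,n])\cap[-n,n]$. *)

theory Defs
  imports Complex_Main
begin

definition xi :: complex where
  "xi = exp (\<i> * of_real pi / 5)"

definition tau :: real where
  "tau = (1 + sqrt 5) / 2"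

definition L :: "nat \<Rightarrow> real set" where
  "L n = {Re z | z. Im z = 0 \<and>
      (\<exists>c :: nat \<Rightarrow> nat. (\<Sum>j<10. c j) \<le> n \<and> z = (\<Sum>j<10. of_nat (c j) * xi ^ j))}"

definition Ztau :: "real set" where
  "Ztau = {of_int a + of_int b * tau | a b. True}"

definition conj5 :: "real \<Rightarrow> real" where
  "conj5 x = (THE y. \<exists>a b :: rat. x = of_rat a + of_rat b * sqrt 5 \<and> y = of_rat a - of_rat b * sqrt 5)"

definition Sigma_win :: "real set \<Rightarrow> real set" where
  "Sigma_win \<Omega> = {x \<in> Ztau. conj5 x \<in> \<Omega>}"

end

theory Submission
  imports Defs "HOL-Computational_Algebra.Primes"
begin

lemma sqrt5_irr: "sqrt 5 \<notin> \<rat>"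
proof
  have e: "{2..<5::nat} = {2,3,4}" by auto
  have p: "prime (5::nat)" unfolding prime_nat_iff' e by auto
  assume "sqrt 5 \<in> \<rat>"
  then obtain m n :: nat
    where n: "n \<noteq> 0"
      and sqrt_rat: "\<bar>sqrt 5\<bar> = m / n"
      and cp: "coprime m n" by (rule Rats_abs_nat_div_natE)
  from n and sqrt_rat have "real m = sqrt 5 * n" by simp
  then have "real (m\<^sup>2) = (sqrt 5)\<^sup>2 * n\<^sup>2" by (simp add: power_mult_distrib)
  also have "(sqrt 5)\<^sup>2 = 5" by simp
  finally have eq: "m\<^sup>2 = 5 * n\<^sup>2" by (metis of_nat_eq_iff of_nat_mult of_nat_power of_nat_numeral)
  then have "5 dvd m\<^sup>2" ..
  with p have dvd_m: "5 dvd m" by (rule prime_dvd_power)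
  then obtain k where "m = 5 * k" ..
  with eq have "5 * n\<^sup>2 = 5\<^sup>2 * k\<^sup>2" by algebra
  then have "n\<^sup>2 = 5 * k\<^sup>2" by (simp add: power2_eq_square)
  then have "5 dvd n\<^sup>2" ..
  with p have "5 dvd n" by (rule prime_dvd_power)
  with dvd_m have "5 dvd gcd m n" by (rule gcd_greatest)
  with cp show False by simp
qed

lemma indep5: fixes a b :: real assumes "a \<in> \<rat>" "b \<in> \<rat>" "a + b * sqrt 5 = 0"
  shows "a = 0 \<and> b = 0"
proof (cases "b = 0")
  case True then show ?thesis using assms by simp
next
  case False
  then have "sqrt 5 = - a / b" using assms(3) by (simp add: field_simps)
  then have "sqrt 5 \<in> \<rat>" using assms by simp
  then show ?thesis using sqrt5_irr by blast
qed

lemma tau_indep: fixes a b c d :: int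
  assumes "of_int a + of_int b * tau = of_int c + of_int d * tau"
  shows "a = c \<and> b = d"
proof -
  have "(of_int (a - c) + of_int (b - d) / 2) + (of_int (b - d) / 2) * sqrt 5 = 0"
    using assms unfolding tau_def by (simp add: field_simps)
  then have "of_int (a - c) + real_of_int (b - d) / 2 = 0 \<and> real_of_int (b - d) / 2 = 0"
    by (intro indep5) auto
  then show ?thesis by auto
qed

lemma conj5_Ztau: "conj5 (of_int a + of_int b * tau) = of_int a + of_int b * (1 - tau)"
  unfolding conj5_def
proof (rule the_equality)
  show "\<exists>p q :: rat. of_int a + of_int b * tau = of_rat p + of_rat q * sqrt 5 \<and>
      of_int a + of_int b * (1 - tau) = of_rat p - of_rat q * sqrt 5"
    by (rule exI[of _ "of_int a + of_int b / 2"], rule exI[of _ "of_int b / 2"])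
       (simp add: tau_def of_rat_add of_rat_divide of_rat_mult field_simps)
next
  fix y assume "\<exists>p q :: rat. of_int a + of_int b * tau = of_rat p + of_rat q * sqrt 5 \<and>
      y = of_rat p - of_rat q * sqrt 5"
  then obtain p q :: rat where h: "of_int a + of_int b * tau = of_rat p + of_rat q * sqrt 5"
     "y = of_rat p - of_rat q * sqrt 5" by blast
  have "(of_int a + of_int b / 2 - of_rat p) + (of_int b / 2 - of_rat q) * sqrt 5 = 0"
    using h(1) unfolding tau_def by (simp add: field_simps)
  then have "(of_int a + of_int b / 2 - of_rat p :: real) = 0 \<and> of_int b / 2 - of_rat q = (0::real)"
    by (intro indep5) auto
  then show "y = of_int a + of_int b * (1 - tau)" using h(2) unfolding tau_def
    by (simp add: field_simps)
qed

lemma cos_pi5: "cos (pi/5) = tau/2"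
proof -
  define c where "c = cos(pi/5)"
  have c0: "c > 0" unfolding c_def by (rule cos_gt_zero_pi; use pi_gt_zero in linarith)
  have "cos (3*(pi/5)) = cos (pi - 2*(pi/5))" by (simp add: field_simps)
  then have "4*c^3 - 3*c = -(2*c^2 - 1)" unfolding c_def cos_treble_cos cos_pi_minus cos_double_cos .
  then have "(c+1)*(4*c^2-2*c-1) = 0" by (simp add: algebra_simps power2_eq_square power3_eq_cube)
  with c0 have "4*c^2-2*c-1 = 0" by simp
  then have "(4*c-1)^2 = (sqrt 5)^2" by (simp add: algebra_simps power2_eq_square)
  then have "4*c-1 = sqrt 5 \<or> 4*c-1 = - sqrt 5" by (rule power2_eq_iff[THEN iffD1])
  moreover have "sqrt 5 > 1" by simp
  ultimately have "4*c-1 = sqrt 5" using c0 by linarith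
  then show ?thesis unfolding c_def tau_def by simp
qed


lemma tau_sq: "tau^2 = tau + 1"
  unfolding tau_def by (simp add: power2_eq_square field_simps)

lemma sum10: "(\<Sum>j<10. (f::nat\<Rightarrow>_) j) = f 0 + f 1 + f 2 + f 3 + f 4 + f 5 + f 6 + f 7 + f 8 + (f 9 :: 'a::comm_monoid_add)"
  by (simp add: eval_nat_numeral ac_simps)

lemma xi_cis: "xi = cis (pi/5)" unfolding xi_def cis_conv_exp by (simp add: field_simps)

lemma xi_pow: "xi ^ j = cis (real j * pi / 5)"
proof -
  have "xi ^ j = cis (pi/5) ^ j" unfolding xi_cis ..
  also have "\<dots> = cis (real j * (pi/5))" by (rule DeMoivre)
  finally show ?thesis by simp
qed

lemma xi5: "xi ^ 5 = -1"
  by (simp add: xi_pow)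

lemma xi_shift: "xi ^ (j + 5) = - (xi ^ j)"
  by (simp add: power_add xi5)

lemma sin_pi5_pos: "sin (pi/5) > 0"
  by (rule sin_gt_zero; use pi_gt_zero in linarith)

lemma xi_vals:
  "Re xi = tau/2" "Im xi = sin (pi/5)"
  "Re (xi^2) = (tau-1)/2" "Im (xi^2) = tau * sin (pi/5)"
  "Re (xi^3) = -(tau-1)/2" "Im (xi^3) = tau * sin (pi/5)"
  "Re (xi^4) = -tau/2" "Im (xi^4) = sin (pi/5)"
proof -
  have c2: "cos (2*(pi/5)) = (tau-1)/2" unfolding cos_double_cos cos_pi5
    using tau_sq by (simp add: power_divide)
  have s2: "sin (2*(pi/5)) = tau * sin (pi/5)" unfolding sin_double cos_pi5 by simp
  have p2: "real 2 * pi / 5 = 2*(pi/5)" by simp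
  have c3: "cos (real 3 * pi / 5) = -(tau-1)/2"
  proof -
    have "cos (real 3 * pi / 5) = cos (pi - 2*(pi/5))" by (simp add: field_simps)
    also have "\<dots> = - cos (2*(pi/5))" by (rule cos_pi_minus)
    finally show ?thesis using c2 by simp
  qed
  have s3: "sin (real 3 * pi / 5) = tau * sin (pi/5)"
  proof -
    have "sin (real 3 * pi / 5) = sin (pi - 2*(pi/5))" by (simp add: field_simps)
    also have "\<dots> = sin (2*(pi/5))" by (rule sin_pi_minus)
    finally show ?thesis using s2 by simp
  qed
  have c4: "cos (real 4 * pi / 5) = -tau/2"
  proof -
    have "cos (real 4 * pi / 5) = cos (pi - (pi/5))" by (simp add: field_simps)
    also have "\<dots> = - cos (pi/5)" by (rule cos_pi_minus)
    finally show ?thesis using cos_pi5 by simp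
  qed
  have s4: "sin (real 4 * pi / 5) = sin (pi/5)"
  proof -
    have "sin (real 4 * pi / 5) = sin (pi - (pi/5))" by (simp add: field_simps)
    also have "\<dots> = sin (pi/5)" by (rule sin_pi_minus)
    finally show ?thesis .
  qed
  show "Re xi = tau/2" "Im xi = sin (pi/5)" using cos_pi5 unfolding xi_cis by simp_all
  show "Re (xi^2) = (tau-1)/2" "Im (xi^2) = tau * sin (pi/5)"
    unfolding xi_pow p2 using c2 s2 by simp_all
  show "Re (xi^3) = -(tau-1)/2" "Im (xi^3) = tau * sin (pi/5)"
    unfolding xi_pow using c3 s3 by simp_all
  show "Re (xi^4) = -tau/2" "Im (xi^4) = sin (pi/5)"
    unfolding xi_pow using c4 s4 by simp_all
qed




lemma reZ_alg: "(c0::real) + c1 * (tau/2) + c2 * ((tau-1)/2)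
     + c3 * (-(tau-1)/2) + c4 * (-tau/2) - c5 - c6 * (tau/2)
     - c7 * ((tau-1)/2) - (c2 + c3 - c7) * (-(tau-1)/2) - (c1 + c4 - c6) * (-tau/2)
   = (c0 - c5) + tau * (c1 - c6) + (tau - 1) * (c2 - c7)"
  by (simp add: field_simps)

lemma L_char:
  assumes "x \<in> L n"
  shows "\<exists>D P Q::int. \<bar>D\<bar> + 2*\<bar>P\<bar> + 2*\<bar>Q\<bar> \<le> int n \<and>
           x = of_int D + tau * of_int P + (tau - 1) * of_int Q"
proof -
  from assms obtain z c where hz: "x = Re z" "Im z = 0" "(\<Sum>j<10. c j) \<le> n"
      "z = (\<Sum>j<10. of_nat (c j) * xi ^ j)" unfolding L_def by blast
  have p5: "xi^5 = -1" by (rule xi5)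
  have p6: "xi^6 = - xi" using xi_shift[of 1] by simp
  have p7: "xi^7 = - (xi^2)" using xi_shift[of 2] by simp
  have p8: "xi^8 = - (xi^3)" using xi_shift[of 3] by simp
  have p9: "xi^9 = - (xi^4)" using xi_shift[of 4] by simp
  define s where "s = sin (pi/5)"
  have s0: "s > 0" unfolding s_def by (rule sin_pi5_pos)
  have ReZ: "Re z = real (c 0) + real (c 1) * (tau/2) + real (c 2) * ((tau-1)/2)
     + real (c 3) * (-(tau-1)/2) + real (c 4) * (-tau/2) - real (c 5) - real (c 6) * (tau/2)
     - real (c 7) * ((tau-1)/2) - real (c 8) * (-(tau-1)/2) - real (c 9) * (-tau/2)"
    unfolding hz(4) sum10 by (simp add: p5 p6 p7 p8 p9 xi_vals)
  have ImZ: "Im z = real (c 1) * s + real (c 2) * (tau * s)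
     + real (c 3) * (tau * s) + real (c 4) * s - real (c 6) * s
     - real (c 7) * (tau * s) - real (c 8) * (tau * s) - real (c 9) * s"
    unfolding hz(4) sum10 s_def by (simp add: p5 p6 p7 p8 p9 xi_vals)
  define A where "A = int (c 1) + int (c 4) - int (c 6) - int (c 9)"
  define B where "B = int (c 2) + int (c 3) - int (c 7) - int (c 8)"
  have "s * (of_int A + of_int B * tau) = 0" using ImZ hz(2)
    by (simp add: A_def B_def algebra_simps)
  then have "of_int A + of_int B * tau = of_int 0 + of_int 0 * tau" using s0 by simp
  then have AB: "A = 0" "B = 0" using tau_indep by blast+
  have i9: "int (c 9) = int (c 1) + int (c 4) - int (c 6)" using AB(1) unfolding A_def by simp
  have h9: "real (c 9) = real (c 1) + real (c 4) - real (c 6)"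
    using arg_cong[OF i9, of real_of_int] by simp
  have i8: "int (c 8) = int (c 2) + int (c 3) - int (c 7)" using AB(2) unfolding B_def by simp
  have h8: "real (c 8) = real (c 2) + real (c 3) - real (c 7)"
    using arg_cong[OF i8, of real_of_int] by simp
  define D where "D = int (c 0) - int (c 5)"
  define P where "P = int (c 1) - int (c 6)"
  define Q where "Q = int (c 2) - int (c 7)"
  have "x = of_int D + tau * of_int P + (tau - 1) * of_int Q"
  proof -
    have e: "Re z = (real (c 0) - real (c 5)) + tau * (real (c 1) - real (c 6)) + (tau - 1) * (real (c 2) - real (c 7))"
      unfolding ReZ h9 h8 by (rule reZ_alg)
    have "real_of_int D = real (c 0) - real (c 5)" "real_of_int P = real (c 1) - real (c 6)"
      "real_of_int Q = real (c 2) - real (c 7)" unfolding D_def P_def Q_def by simp_all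
    then show ?thesis using e hz(1) by simp
  qed
  moreover have "\<bar>D\<bar> + 2*\<bar>P\<bar> + 2*\<bar>Q\<bar> \<le> int n"
  proof -
    have "c 0 + c 1 + c 2 + c 3 + c 4 + c 5 + c 6 + c 7 + c 8 + c 9 \<le> n" using hz(3) unfolding sum10 .
    then have tot: "int (c 0) + int (c 1) + int (c 2) + int (c 3) + int (c 4) + int (c 5) + int (c 6) + int (c 7) + int (c 8) + int (c 9) \<le> int n"
      by linarith
    have d: "\<bar>D\<bar> \<le> int (c 0) + int (c 5)" unfolding D_def by arith
    have p1: "\<bar>P\<bar> \<le> int (c 1) + int (c 6)" unfolding P_def by arith
    have p2: "\<bar>P\<bar> \<le> int (c 4) + int (c 9)" unfolding P_def using i9 by arith
    have q1: "\<bar>Q\<bar> \<le> int (c 2) + int (c 7)" unfolding Q_def by arith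
    have q2: "\<bar>Q\<bar> \<le> int (c 3) + int (c 8)" unfolding Q_def using i8 by arith
    show ?thesis using tot d p1 p2 q1 q2 by linarith
  qed
  ultimately show ?thesis by blast
qed


lemma tau_bounds: "1.6 < tau" "tau < 1.65"
proof -
  have "2.2 < sqrt 5" by (rule real_less_rsqrt) (simp add: power2_eq_square)
  moreover have "sqrt 5 < 2.3" by (rule real_less_lsqrt) (simp_all add: power2_eq_square)
  ultimately show "1.6 < tau" "tau < 1.65" unfolding tau_def by simp_all
qed

lemma bound_aux1:
  fixes t d p q :: real
  assumes "1 \<le> t" "t \<le> 2"
  shows "\<bar>d + t*p + (t-1)*q\<bar> \<le> \<bar>d\<bar> + 2*\<bar>p\<bar> + 2*\<bar>q\<bar>"
proof -
  have a: "\<bar>t*p\<bar> \<le> 2*\<bar>p\<bar>" using assms by (simp add: abs_mult mult_right_mono)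
  have b: "\<bar>(t-1)*q\<bar> \<le> 2*\<bar>q\<bar>" using assms by (simp add: abs_mult mult_right_mono)
  have "\<bar>d + t*p + (t-1)*q\<bar> \<le> \<bar>d + t*p\<bar> + \<bar>(t-1)*q\<bar>" by (rule abs_triangle_ineq)
  moreover have "\<bar>d + t*p\<bar> \<le> \<bar>d\<bar> + \<bar>t*p\<bar>" by (rule abs_triangle_ineq)
  ultimately show ?thesis using a b by linarith
qed

lemma bound_aux2:
  fixes t d p q :: real
  assumes "1 \<le> t" "t \<le> 2"
  shows "\<bar>d + (1-t)*p - t*q\<bar> \<le> \<bar>d\<bar> + 2*\<bar>p\<bar> + 2*\<bar>q\<bar>"
proof -
  have a: "\<bar>(1-t)*p\<bar> \<le> 2*\<bar>p\<bar>" using assms by (simp add: abs_mult mult_right_mono)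
  have b: "\<bar>t*q\<bar> \<le> 2*\<bar>q\<bar>" using assms by (simp add: abs_mult mult_right_mono)
  have "\<bar>d + (1-t)*p - t*q\<bar> \<le> \<bar>d + (1-t)*p\<bar> + \<bar>t*q\<bar>" by (rule abs_triangle_ineq4)
  moreover have "\<bar>d + (1-t)*p\<bar> \<le> \<bar>d\<bar> + \<bar>(1-t)*p\<bar>" by (rule abs_triangle_ineq)
  ultimately show ?thesis using a b by linarith
qed

lemma L_sub: "L n \<subseteq> Sigma_win {- real n .. real n} \<inter> {- real n .. real n}"
proof
  fix x assume "x \<in> L n"
  then obtain D P Q :: int where h: "\<bar>D\<bar> + 2*\<bar>P\<bar> + 2*\<bar>Q\<bar> \<le> int n"
    "x = of_int D + tau * of_int P + (tau - 1) * of_int Q" using L_char by blast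
  have xz: "x = of_int (D - Q) + of_int (P + Q) * tau" using h(2) by (simp add: algebra_simps)
  have xZ: "x \<in> Ztau" unfolding Ztau_def using xz by blast
  have "conj5 x = of_int (D - Q) + of_int (P + Q) * (1 - tau)" unfolding xz by (rule conj5_Ztau)
  then have cx: "conj5 x = of_int D + (1 - tau) * of_int P - tau * of_int Q"
    by (simp add: algebra_simps)
  have t12: "1 \<le> tau" "tau \<le> 2" using tau_bounds by simp_all
  have hn: "\<bar>real_of_int D\<bar> + 2*\<bar>real_of_int P\<bar> + 2*\<bar>real_of_int Q\<bar> \<le> real n"
  proof -
    have "real_of_int (\<bar>D\<bar> + 2*\<bar>P\<bar> + 2*\<bar>Q\<bar>) \<le> real_of_int (int n)"
      using h(1) by (simp only: of_int_le_iff)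
    then show ?thesis by simp
  qed
  have "\<bar>x\<bar> \<le> real n" using bound_aux1[OF t12, of "of_int D" "of_int P" "of_int Q"] hn h(2)
    by (simp add: mult.commute)
  moreover have "\<bar>conj5 x\<bar> \<le> real n" using bound_aux2[OF t12, of "of_int D" "of_int P" "of_int Q"] hn cx
    by (simp add: mult.commute)
  ultimately show "x \<in> Sigma_win {- real n .. real n} \<inter> {- real n .. real n}"
    unfolding Sigma_win_def using xZ by auto
qed

lemma not_in_L:
  fixes a b :: int
  assumes "\<And>Q::int. int n < \<bar>a + Q\<bar> + 2*\<bar>b - Q\<bar> + 2*\<bar>Q\<bar>"
  shows "of_int a + of_int b * tau \<notin> L n"
proof
  assume "of_int a + of_int b * tau \<in> L n"
  then obtain D P Q :: int where h: "\<bar>D\<bar> + 2*\<bar>P\<bar> + 2*\<bar>Q\<bar> \<le> int n"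
    "of_int a + of_int b * tau = of_int D + tau * of_int P + (tau - 1) * of_int Q" using L_char by blast
  have "of_int a + of_int b * tau = of_int (D - Q) + of_int (P + Q) * tau" using h(2) by (simp add: algebra_simps)
  then have "a = D - Q" "b = P + Q" using tau_indep by blast+
  then show False using assms[of Q] h(1) by simp
qed

lemma in_RHS:
  fixes a b :: int
  assumes "\<bar>of_int a + of_int b * tau\<bar> \<le> real n" "\<bar>of_int a + of_int b * (1 - tau)\<bar> \<le> real n"
  shows "of_int a + of_int b * tau \<in> Sigma_win {- real n .. real n} \<inter> {- real n .. real n}"
proof -
  have "of_int a + of_int b * tau \<in> Ztau" unfolding Ztau_def by blast
  moreover have "conj5 (of_int a + of_int b * tau) = of_int a + of_int b * (1 - tau)" by (rule conj5_Ztau)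
  ultimately show ?thesis using assms unfolding Sigma_win_def by auto
qed

theorem lemma6p10:
  fixes n :: nat
  assumes "n \<ge> 3"
  shows "L n \<subset> Sigma_win {- real n .. real n} \<inter> {- real n .. real n}"
proof -
  have tb: "1.6 < tau" "tau < 1.65" by (rule tau_bounds)+
  obtain a b :: int where ab: "\<And>Q::int. int n < \<bar>a + Q\<bar> + 2*\<bar>b - Q\<bar> + 2*\<bar>Q\<bar>"
    "\<bar>of_int a + of_int b * tau\<bar> \<le> real n" "\<bar>of_int a + of_int b * (1 - tau)\<bar> \<le> real n"
  proof (cases "n = 3")
    case True
    show ?thesis
    proof (rule that[of "-1" 2])
      show "int n < \<bar>-1 + Q\<bar> + 2*\<bar>2 - Q\<bar> + 2*\<bar>Q\<bar>" for Q using True by (simp add: abs_if)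
      show "\<bar>of_int (-1) + of_int 2 * tau\<bar> \<le> real n" using True tb by simp
      show "\<bar>of_int (-1) + of_int 2 * (1 - tau)\<bar> \<le> real n" using True tb by simp
    qed
  next
    case False
    then have n4: "n \<ge> 4" using assms by simp
    then have n4r: "real n \<ge> 4" by simp
    show ?thesis
    proof (rule that[of "2 - int n" 3])
      show "int n < \<bar>2 - int n + Q\<bar> + 2*\<bar>3 - Q\<bar> + 2*\<bar>Q\<bar>" for Q using n4 by (simp add: abs_if)
      show "\<bar>of_int (2 - int n) + of_int 3 * tau\<bar> \<le> real n" using n4r tb by simp
      show "\<bar>of_int (2 - int n) + of_int 3 * (1 - tau)\<bar> \<le> real n" using n4r tb by simp
    qed
  qed
  have "of_int a + of_int b * tau \<notin> L n" using ab(1) by (rule not_in_L)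
  moreover have "of_int a + of_int b * tau \<in> Sigma_win {- real n .. real n} \<inter> {- real n .. real n}"
    using ab(2,3) by (rule in_RHS)
  ultimately show ?thesis using L_sub by blast
qed

end
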